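(* Let $\mathcal{P}\subset\mathbb{R}^d$ be a generalized permutahedron. For $m\in\mathbb{Z}_{>0}$ let $$\chi_d(\mathcal{P})(m)=\#\{y\in[m]^d:\ \mathcal{P}_y \text{ is a vertex of }\mathcal{P}\},$$ the number of $\mathcal{P}$-generic directions $y$ with $y\in[m]^d=\{1,\dots,m\}^d$. Then $\chi_d(\mathcal{P})(m)$ agrees with a polynomial in $m$ of degree $d$, and for all $m\in\mathbb{Z}_{>0}$ $$(-1)^d\chi_d(\mathcal{P})(-m)=\sum_{y\in[m]^d}\#(\text{vertices of }\mathcal{P}_y).$$
   Context: Directions $y\in(\mathbb{R}^d)^*\cong\mathbb{R}^d$ act by $y(x)=\sum_i y_ix_i$. For a polytope $\mathcal{P}$ the $y$-maximal face is $\mathcal{P}_y=\{x\in\mathcal{P}: y(x)\ge y(x')\ \forall x'\in\mathcal{P}\}$; $y$ is $\mathcal{P}$-generic if $\mathcal{P}_y$ is a single vertex. The normal cone of a face $F$ is $N_\mathcal{P}(F)=\{y:\mathcal{P}_y\supseteq F\}$ and the normal fan $\mathcal{N}(\mathcal{P})$ is the set of all normal cones. The braid fan in $\mathbb{R}^d$ consists of the cones $\{y: y_i=y_j \text{ for } i,j\in T_a;\ y_i\ge y_j \text{ for } i\in T_a,j\in T_b,a<b\}$ for ordered set compositions $(T_1,\dots,T_k)$ of $[d]$; it is the normal fan of the standard permutahedron $\mathrm{conv}\{(\sigma(1),\dots,\sigma(d)):\sigma\in S_d\}$. A polytope $\mathcal{P}\subset\mathbb{R}^d$ is a generalized permutahedron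 if its normal fan is a coarsening of the braid fan, i.e. every cone of $\mathcal{N}(\mathcal{P})$ is a union of braid cones. *)

theory Defs
  imports "HOL-Analysis.Analysis" "HOL-Computational_Algebra.Polynomial"
begin

text \<open>Directions and points both live in real^'d; y(x) = y \<bullet> x.\<close>

definition polytope :: "(real ^ 'd) set \<Rightarrow> bool" where
  "polytope P \<longleftrightarrow> (\<exists>S. finite S \<and> S \<noteq> {} \<and> P = convex hull S)"

definition max_face :: "(real ^ 'd) set \<Rightarrow> real ^ 'd \<Rightarrow> (real ^ 'd) set" where
  "max_face P y = {x \<in> P. \<forall>x'\<in>P. y \<bullet> x' \<le> y \<bullet> x}"

definition generic_dir :: "(real ^ 'd) set \<Rightarrow> real ^ 'd \<Rightarrow> bool" where
  "generic_dir P y \<longleftrightarrow> (\<exists>v. max_face P y = {v})"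

definition vertices :: "(real ^ 'd) set \<Rightarrow> (real ^ 'd) set" where
  "vertices P = {v. v extreme_point_of P}"

definition normal_cone :: "(real ^ 'd) set \<Rightarrow> (real ^ 'd) set \<Rightarrow> (real ^ 'd) set" where
  "normal_cone P F = {y. F \<subseteq> max_face P y}"

text \<open>An ordered set composition (T_1,...,T_k) of the index set is encoded by the
  block-index function f with f ` UNIV = {..<k} (T_{a+1} = f^{-1}(a)).\<close>
definition braid_cone :: "('d \<Rightarrow> nat) \<Rightarrow> (real ^ 'd) set" where
  "braid_cone f = {y. (\<forall>i j. f i = f j \<longrightarrow> y $ i = y $ j) \<and>
                      (\<forall>i j. f i < f j \<longrightarrow> y $ i \<ge> y $ j)}"

definition braid_fan :: "(real ^ ('d::finite)) set set" where
  "braid_fan = {braid_cone f | f k. range f = {..<(k::nat)}}"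

definition gen_permutahedron :: "(real ^ ('d::finite)) set \<Rightarrow> bool" where
  "gen_permutahedron P \<longleftrightarrow> polytope P \<and>
     (\<forall>F. F face_of P \<and> F \<noteq> {} \<longrightarrow>
        (\<exists>C \<subseteq> braid_fan. normal_cone P F = \<Union>C))"

definition grid :: "nat \<Rightarrow> (real ^ 'd) set" where
  "grid m = {y. \<forall>i. y $ i \<in> real ` {1..m}}"

definition chi :: "(real ^ ('d::finite)) set \<Rightarrow> nat \<Rightarrow> nat" where
  "chi P m = card {y \<in> grid m. generic_dir P y}"

end

theory Submission
  imports Defs
begin


lemma swap_facts:
  fixes f :: "'a \<Rightarrow> real"
  assumes dist: "\<And>a b. a \<noteq> b \<Longrightarrow> f a \<noteq> f b" and ji: "f j < f i"
    and adj: "\<And>k. \<not> (f j < f k \<and> f k < f i)"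
  defines "g \<equiv> \<lambda>k. if k = i then f j else if k = j then f i else f k"
    and "pf \<equiv> \<lambda>k. if k = i \<or> k = j then (f i + f j) / 2 else f k"
  shows "a \<noteq> b \<Longrightarrow> g a \<noteq> g b"
    and "g b < g a \<Longrightarrow> (a, b) \<noteq> (j, i) \<Longrightarrow> f b < f a \<and> (a, b) \<noteq> (i, j)"
    and "f b \<le> f a \<Longrightarrow> pf b \<le> pf a"
    and "g a < g b \<Longrightarrow> (a, b) \<noteq> (i, j) \<Longrightarrow> pf a < pf b"
proof -
  have ij: "i \<noteq> j" using ji by auto
  note d = dist[of a b] dist[of a i] dist[of a j] dist[of b i] dist[of b j] adj[of a] adj[of b]
  show "a \<noteq> b \<Longrightarrow> g a \<noteq> g b"
    using d ij ji unfolding g_def by (auto split: if_splits)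
  show "g b < g a \<Longrightarrow> (a, b) \<noteq> (j, i) \<Longrightarrow> f b < f a \<and> (a, b) \<noteq> (i, j)"
    using d ij ji unfolding g_def by (auto split: if_splits)
  show "f b \<le> f a \<Longrightarrow> pf b \<le> pf a"
    using d ij ji unfolding pf_def by (auto split: if_splits)
  show "g a < g b \<Longrightarrow> (a, b) \<noteq> (i, j) \<Longrightarrow> pf a < pf b"
    using d ij ji unfolding g_def pf_def by (auto split: if_splits)
qed


lemma interp_exists:
  fixes f :: "nat \<Rightarrow> real"
  shows "\<exists>s::real poly. degree s \<le> N \<and> (\<forall>k\<le>N. poly s (real k) = f k)"
proof (induction N)
  case 0
  show ?case by (rule exI[of _ "[:f 0:]"]) auto
next
  case (Suc N)
  then obtain s where s: "degree s \<le> N" "\<forall>k\<le>N. poly s (real k) = f k" by blast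
  define q where "q = (\<Prod>i\<le>N. [:- real i, 1:])"
  have dq: "degree q \<le> Suc N"
  proof -
    have "degree q \<le> sum (degree \<circ> (\<lambda>i. [:- real i, 1:])) {..N}"
      unfolding q_def by (rule degree_prod_sum_le) auto
    also have "\<dots> = Suc N" by simp
    finally show ?thesis .
  qed
  have q0: "poly q (real k) = 0" if "k \<le> N" for k
    unfolding q_def poly_prod using that by (auto intro!: prod_zero)
  have q1: "poly q (real (Suc N)) \<noteq> 0"
    unfolding q_def poly_prod by (auto simp: prod_zero_iff)
  define c where "c = (f (Suc N) - poly s (real (Suc N))) / poly q (real (Suc N))"
  show ?case
  proof (rule exI[of _ "s + smult c q"], intro conjI allI impI)
    show "degree (s + smult c q) \<le> Suc N"
      using s(1) dq by (meson degree_add_le degree_smult_le le_SucI order_trans)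
    fix k assume k: "k \<le> Suc N"
    show "poly (s + smult c q) (real k) = f k"
    proof (cases "k = Suc N")
      case True thus ?thesis using q1 by (simp add: c_def)
    next
      case False thus ?thesis using k s(2) q0 by simp
    qed
  qed
qed

lemma roots_zero:
  fixes p :: "real poly"
  assumes "degree p \<le> n" "\<And>k. k \<le> n \<Longrightarrow> poly p (real k) = 0"
  shows "p = 0"
proof (rule ccontr)
  assume p: "p \<noteq> 0"
  have "real ` {..n} \<subseteq> {x. poly p x = 0}" using assms(2) by auto
  hence "card (real ` {..n}) \<le> card {x. poly p x = 0}"
    by (intro card_mono poly_roots_finite p)
  also have "\<dots> \<le> degree p" by (rule card_poly_roots_bound[OF p])
  also have "card (real ` {..n}) = Suc n" by (subst card_image) (auto simp: inj_on_def)
  finally show False using assms(1) by simp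
qed

lemma diff_degree:
  fixes s :: "real poly"
  assumes "degree s \<le> Suc n"
  shows "degree (pcompose s [:1,1:] - s) \<le> n"
proof (rule degree_le, intro allI impI)
  fix i assume i: "n < i"
  have dc: "degree (pcompose s [:1,1:]) = degree s" by (simp add: degree_pcompose)
  show "coeff (pcompose s [:1, 1:] - s) i = 0"
  proof (cases "i = Suc n \<and> degree s = Suc n")
    case True
    have "coeff (pcompose s [:1,1:]) (Suc n) = lead_coeff (pcompose s [:1,1:])"
      using True dc by simp
    also have "\<dots> = lead_coeff s" by (subst lead_coeff_comp) auto
    finally show ?thesis using True by simp
  next
    case False
    hence "i > degree s" using i assms by auto
    thus ?thesis using dc by (simp add: coeff_eq_0)
  qed
qed

lemma antidiff:
  fixes r :: "real poly" and f :: "nat \<Rightarrow> real"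
  assumes "degree r \<le> n" "\<And>m. f (Suc m) = f m + poly r (real m)"
  shows "\<exists>s. degree s \<le> Suc n \<and> (\<forall>x. poly s (x+1) = poly s x + poly r x)
             \<and> (\<forall>m. poly s (real m) = f m)"
proof -
  obtain s where s: "degree s \<le> Suc n" "\<forall>k\<le>Suc n. poly s (real k) = f k"
    using interp_exists by blast
  define D where "D = pcompose s [:1,1:] - s - r"
  have dD: "degree D \<le> n" unfolding D_def
    using diff_degree[OF s(1)] assms(1) by (meson degree_diff_le)
  have "D = 0"
  proof (rule roots_zero[OF dD])
    fix k assume k: "k \<le> n"
    have "poly D (real k) = poly s (real (Suc k)) - poly s (real k) - poly r (real k)"
      unfolding D_def by (simp add: poly_pcompose add.commute)
    also have "\<dots> = 0"
    proof -
      have "poly s (real (Suc k)) = f (Suc k)" "poly s (real k) = f k" using s(2) k by auto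
      thus ?thesis using assms(2)[of k] by simp
    qed
    finally show "poly D (real k) = 0" .
  qed
  have id: "poly s (x+1) = poly s x + poly r x" for x
  proof -
    have "poly D x = 0" using \<open>D = 0\<close> by simp
    thus ?thesis unfolding D_def by (simp add: poly_pcompose add.commute)
  qed
  have "poly s (real m) = f m" for m
  proof (induction m)
    case 0 show ?case using s(2) by (metis le0 of_nat_0)
  next
    case (Suc m) thus ?case using id[of "real m"] assms(2)[of m] by (simp add: add.commute)
  qed
  thus ?thesis using s(1) id by blast
qed


definition Top :: "('a \<Rightarrow> 'a \<Rightarrow> bool) \<Rightarrow> 'a set \<Rightarrow> 'a set" where
  "Top R I = {i\<in>I. \<forall>k\<in>I. \<not> R k i}"

lemma gen_fiber:
  fixes R :: "'a \<Rightarrow> 'a \<Rightarrow> bool" and m :: nat and Q :: "nat \<Rightarrow> nat \<Rightarrow> bool"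
    and N :: nat and C :: "'a set \<Rightarrow> ('a \<Rightarrow> nat) \<Rightarrow> bool"
  assumes M: "M \<subseteq> Top R I"
  and Qtop: "\<And>a. a \<le> N \<Longrightarrow> Q a (Suc m)"
  and C: "\<And>y. y \<in> PiE I (\<lambda>_. {1..Suc m}) \<Longrightarrow> C M y \<longleftrightarrow> (\<forall>i\<in>M. y i = Suc m) \<and> (\<forall>i\<in>I-M. y i \<le> N)"
  and N: "N \<le> Suc m"
  defines "g \<equiv> (\<lambda>z i. if i \<in> M then Suc m else z i)"
  shows "{y \<in> PiE I (\<lambda>_. {1..Suc m}). (\<forall>i\<in>I. \<forall>j\<in>I. R i j \<longrightarrow> Q (y j) (y i)) \<and> C M y}
       = g ` {z \<in> PiE (I - M) (\<lambda>_. {1..N}). \<forall>i\<in>I-M. \<forall>j\<in>I-M. R i j \<longrightarrow> Q (z j) (z i)}"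
    (is "?A = g ` ?B")
  and "inj_on g {z \<in> PiE (I - M) (\<lambda>_. {1..N}). \<forall>i\<in>I-M. \<forall>j\<in>I-M. R i j \<longrightarrow> Q (z j) (z i)}"
proof -
  have MI: "M \<subseteq> I" and MT: "\<And>i k. i \<in> M \<Longrightarrow> k \<in> I \<Longrightarrow> \<not> R k i"
    using M by (auto simp: Top_def)
  show "?A = g ` ?B"
  proof
    show "?A \<subseteq> g ` ?B"
    proof
      fix y assume y: "y \<in> ?A"
      hence yP: "y \<in> PiE I (\<lambda>_. {1..Suc m})" and yQ: "\<forall>i\<in>I. \<forall>j\<in>I. R i j \<longrightarrow> Q (y j) (y i)"
        and yC: "C M y" by auto
      have yM: "\<forall>i\<in>M. y i = Suc m" and yN: "\<forall>i\<in>I-M. y i \<le> N" using C[OF yP] yC by auto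
      define z where "z = restrict y (I - M)"
      have "z \<in> PiE (I - M) (\<lambda>_. {1..N})"
        unfolding PiE_iff z_def
      proof (intro conjI ballI)
        fix i assume i: "i \<in> I - M"
        have "y i \<in> {1..Suc m}" using yP i by (auto simp: PiE_iff)
        thus "restrict y (I - M) i \<in> {1..N}" using yN i by simp
      qed simp
      moreover have "\<forall>i\<in>I-M. \<forall>j\<in>I-M. R i j \<longrightarrow> Q (z j) (z i)"
        using yQ unfolding z_def by simp
      ultimately have zB: "z \<in> ?B" by blast
      have gzy: "g z = y"
      proof
        fix i show "g z i = y i"
        proof (cases "i \<in> M")
          case True thus ?thesis using yM unfolding g_def by simp
        next
          case False
          show ?thesis
          proof (cases "i \<in> I")
            case True thus ?thesis using False unfolding g_def z_def by simp
          next
            case F2: False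
            have "y i = undefined" by (rule PiE_arb[OF yP F2])
            thus ?thesis using False F2 unfolding g_def z_def by simp
          qed
        qed
      qed
      show "y \<in> g ` ?B" using gzy zB by blast
    qed
  next
    show "g ` ?B \<subseteq> ?A"
    proof
      fix y assume "y \<in> g ` ?B"
      then obtain z where z: "z \<in> ?B" and yz: "y = g z" by blast
      have zP: "z \<in> PiE (I - M) (\<lambda>_. {1..N})" and zQ: "\<forall>i\<in>I-M. \<forall>j\<in>I-M. R i j \<longrightarrow> Q (z j) (z i)"
        using z by auto
      have zr: "z i \<in> {1..N}" if "i \<in> I - M" for i using zP that by (auto simp: PiE_iff)
      have yP: "y \<in> PiE I (\<lambda>_. {1..Suc m})"
        unfolding PiE_iff
      proof (intro conjI ballI)
        fix i assume i: "i \<in> I"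
        show "y i \<in> {1..Suc m}"
        proof (cases "i \<in> M")
          case True thus ?thesis unfolding yz g_def by simp
        next
          case False thus ?thesis using zr[of i] i N unfolding yz g_def by auto
        qed
      next
        show "y \<in> extensional I"
          unfolding extensional_def
        proof (intro CollectI allI impI)
          fix i assume "i \<notin> I"
          hence "i \<notin> M" "i \<notin> I - M" using MI by auto
          thus "y i = undefined" using PiE_arb[OF zP] unfolding yz g_def by simp
        qed
      qed
      moreover have "\<forall>i\<in>I. \<forall>j\<in>I. R i j \<longrightarrow> Q (y j) (y i)"
      proof (intro ballI impI)
        fix i j assume ij: "i \<in> I" "j \<in> I" "R i j"
        have jM: "j \<notin> M" using MT ij by blast
        show "Q (y j) (y i)"
        proof (cases "i \<in> M")
          case True
          have "z j \<le> N" using zr[of j] ij jM by auto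
          thus ?thesis using True jM Qtop unfolding yz g_def by simp
        next
          case False thus ?thesis using zQ ij jM unfolding yz g_def by simp
        qed
      qed
      moreover have "C M y"
      proof -
        have "\<forall>i\<in>M. y i = Suc m" unfolding yz g_def by simp
        moreover have "\<forall>i\<in>I-M. y i \<le> N" using zr unfolding yz g_def by auto
        ultimately show ?thesis using C[OF yP] by simp
      qed
      ultimately show "y \<in> ?A" by blast
    qed
  qed
  show "inj_on g ?B"
  proof (rule inj_onI)
    fix z1 z2 assume z: "z1 \<in> ?B" "z2 \<in> ?B" "g z1 = g z2"
    show "z1 = z2"
    proof
      fix i show "z1 i = z2 i"
      proof (cases "i \<in> M")
        case True
        hence "i \<notin> I - M" by simp
        thus ?thesis using PiE_arb[of z1 "I-M" "\<lambda>_. {1..N}" i] PiE_arb[of z2 "I-M" "\<lambda>_. {1..N}" i] z(1,2) by simp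
      next
        case False thus ?thesis using fun_cong[OF z(3), of i] unfolding g_def by simp
      qed
    qed
  qed
qed


definition Sc :: "('a \<Rightarrow> 'a \<Rightarrow> bool) \<Rightarrow> 'a set \<Rightarrow> nat \<Rightarrow> nat" where
  "Sc R I m = card {y \<in> PiE I (\<lambda>_. {1..m}). \<forall>i\<in>I. \<forall>j\<in>I. R i j \<longrightarrow> y j < y i}"

definition Wc :: "('a \<Rightarrow> 'a \<Rightarrow> bool) \<Rightarrow> 'a set \<Rightarrow> nat \<Rightarrow> nat" where
  "Wc R I m = card {y \<in> PiE I (\<lambda>_. {1..m}). \<forall>i\<in>I. \<forall>j\<in>I. R i j \<longrightarrow> y j \<le> y i}"


lemma alt_sum_pow:
  assumes "finite T"
  shows "(\<Sum>M\<in>Pow T. (-1::real) ^ card M) = (if T = {} then 1 else 0)"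
proof -
  have "(\<Prod>x\<in>T. (1::real) - 1) = (\<Sum>X\<in>Pow T. (-1) ^ card X * (\<Prod>x\<in>X. 1) * (\<Prod>x\<in>T-X. 1))"
    by (rule prod_diff_conv_sum[OF assms])
  hence e: "(\<Sum>X\<in>Pow T. (-1::real) ^ card X) = 0 ^ card T" by simp
  show ?thesis
  proof (cases "T = {}")
    case False hence "card T > 0" using assms by auto
    thus ?thesis using e False by simp
  qed simp
qed

lemma sum_ind_card:
  "finite B \<Longrightarrow> (\<Sum>y\<in>B. if P y then 1 else 0 :: real) = real (card {y\<in>B. P y})"
  by (simp add: sum.inter_filter[symmetric])

lemma S_rec:
  fixes R :: "'a \<Rightarrow> 'a \<Rightarrow> bool" and m :: nat
  assumes fin: "finite I"
  shows "Sc R I (Suc m) = (\<Sum>M\<in>Pow (Top R I). Sc R (I - M) m)"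
proof -
  let ?A = "{y \<in> PiE I (\<lambda>_. {1..Suc m}). \<forall>i\<in>I. \<forall>j\<in>I. R i j \<longrightarrow> y j < y i}"
  let ?F = "\<lambda>M. {y \<in> PiE I (\<lambda>_. {1..Suc m}). (\<forall>i\<in>I. \<forall>j\<in>I. R i j \<longrightarrow> y j < y i) \<and> {i\<in>I. y i = Suc m} = M}"
  have A: "?A = (\<Union>M\<in>Pow (Top R I). ?F M)"
  proof (intro equalityI subsetI)
    fix y assume y: "y \<in> ?A"
    have "{i\<in>I. y i = Suc m} \<subseteq> Top R I"
    proof
      fix i assume i: "i \<in> {i\<in>I. y i = Suc m}"
      have "\<not> R k i" if "k \<in> I" for k
      proof
        assume "R k i"
        have yy: "\<forall>i\<in>I. \<forall>j\<in>I. R i j \<longrightarrow> y j < y i" using y by simp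
        have "i \<in> I" using i by simp
        hence "y i < y k" using yy that \<open>R k i\<close> by blast
        moreover have "y k \<le> Suc m" using y that by (auto simp: PiE_iff)
        ultimately show False using i by simp
      qed
      thus "i \<in> Top R I" using i by (auto simp: Top_def)
    qed
    thus "y \<in> (\<Union>M\<in>Pow (Top R I). ?F M)" using y by blast
  qed auto
  have finF: "finite (?F M)" for M
    by (rule finite_subset[of _ "PiE I (\<lambda>_. {1..Suc m})"]) (auto intro: finite_PiE fin)
  have finTop: "finite (Top R I)" using fin by (auto simp: Top_def)
  have "card ?A = (\<Sum>M\<in>Pow (Top R I). card (?F M))"
    unfolding A
    apply (rule card_UN_disjoint)
      apply (simp add: finTop)
     apply (intro ballI finF)
    by blast
  also have "\<dots> = (\<Sum>M\<in>Pow (Top R I). Sc R (I - M) m)"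
  proof (rule sum.cong[OF refl])
    fix M assume "M \<in> Pow (Top R I)"
    hence M: "M \<subseteq> Top R I" by auto
    hence MI: "M \<subseteq> I" by (auto simp: Top_def)
    note fb = gen_fiber[OF M, where Q="\<lambda>a b. a < b" and N=m and m=m and C="\<lambda>M y. {i\<in>I. y i = Suc m} = M"]
    have c: "({i\<in>I. y i = Suc m} = M) = ((\<forall>i\<in>M. y i = Suc m) \<and> (\<forall>i\<in>I - M. y i \<le> m))"
      if "y \<in> PiE I (\<lambda>_. {1..Suc m})" for y
    proof -
      have b: "\<And>i. i \<in> I \<Longrightarrow> y i \<le> Suc m" using that by (auto simp: PiE_iff)
      show ?thesis
      proof
        assume L: "{i\<in>I. y i = Suc m} = M"
        have "\<forall>i\<in>M. y i = Suc m" using L by blast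
        moreover have "y i \<le> m" if "i \<in> I - M" for i
        proof -
          have "y i \<noteq> Suc m" using L that by blast
          thus ?thesis using b[of i] that by simp
        qed
        ultimately show "(\<forall>i\<in>M. y i = Suc m) \<and> (\<forall>i\<in>I - M. y i \<le> m)" by blast
      next
        assume R: "(\<forall>i\<in>M. y i = Suc m) \<and> (\<forall>i\<in>I - M. y i \<le> m)"
        show "{i\<in>I. y i = Suc m} = M"
        proof (intro set_eqI iffI)
          fix i assume "i \<in> {i\<in>I. y i = Suc m}"
          thus "i \<in> M" using R by (metis (mono_tags, lifting) DiffI Suc_n_not_le_n mem_Collect_eq)
        next
          fix i assume "i \<in> M" thus "i \<in> {i\<in>I. y i = Suc m}" using R MI by blast
        qed
      qed
    qed
    have Qt: "\<And>a. a \<le> m \<Longrightarrow> a < Suc m" by simp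
    note e1 = fb(1)[OF Qt c] and e2 = card_image[OF fb(2)[OF Qt c]]
    show "card (?F M) = Sc R (I - M) m"
      unfolding Sc_def by (simp only: e1 e2)
  qed
  finally show ?thesis unfolding Sc_def .
qed

lemma W_rec:
  fixes R :: "'a \<Rightarrow> 'a \<Rightarrow> bool" and h :: "'a \<Rightarrow> real"
  assumes fin: "finite I" and rank: "\<And>i j. R i j \<Longrightarrow> h j < h i"
  shows "real (Wc R I m) = (\<Sum>M\<in>Pow (Top R I). (-1) ^ card M * real (Wc R (I - M) (Suc m)))"
proof -
  let ?B = "{y \<in> PiE I (\<lambda>_. {1..Suc m}). \<forall>i\<in>I. \<forall>j\<in>I. R i j \<longrightarrow> y j \<le> y i}"
  define T where "T y = {i\<in>Top R I. y i = Suc m}" for y :: "'a \<Rightarrow> nat"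
  have finB: "finite ?B"
    by (rule finite_subset[of _ "PiE I (\<lambda>_. {1..Suc m})"]) (auto intro: finite_PiE fin)
  have finTop: "finite (Top R I)" using fin by (auto simp: Top_def)
  have fib: "real (Wc R (I - M) (Suc m)) = (\<Sum>y\<in>?B. if M \<subseteq> T y then 1 else 0)"
    if M: "M \<subseteq> Top R I" for M
  proof -
    note fb = gen_fiber[OF M, where Q="\<lambda>a b. a \<le> b" and N="Suc m" and m=m and C="\<lambda>M y. \<forall>i\<in>M. y i = Suc m"]
    have c: "(\<forall>i\<in>M. y i = Suc m) = ((\<forall>i\<in>M. y i = Suc m) \<and> (\<forall>i\<in>I - M. y i \<le> Suc m))"
      if "y \<in> PiE I (\<lambda>_. {1..Suc m})" for y
      using that by (auto simp: PiE_iff)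
    have Qt: "\<And>a. a \<le> Suc m \<Longrightarrow> a \<le> Suc m" by simp
    have "Wc R (I - M) (Suc m) = card {y\<in>?B. \<forall>i\<in>M. y i = Suc m}"
    proof -
      have eq: "{y\<in>?B. \<forall>i\<in>M. y i = Suc m} = {y \<in> PiE I (\<lambda>_. {1..Suc m}). (\<forall>i\<in>I. \<forall>j\<in>I. R i j \<longrightarrow> y j \<le> y i) \<and> (\<forall>i\<in>M. y i = Suc m)}"
        by auto
      note e1 = fb(1)[OF Qt c] and e2 = card_image[OF fb(2)[OF Qt c]]
      show ?thesis unfolding Wc_def eq by (simp only: e1 e2)
    qed
    also have "{y\<in>?B. \<forall>i\<in>M. y i = Suc m} = {y\<in>?B. M \<subseteq> T y}"
      using M unfolding T_def by auto
    finally show ?thesis using finB by (simp add: sum_ind_card)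
  qed
  have "(\<Sum>M\<in>Pow (Top R I). (-1) ^ card M * real (Wc R (I - M) (Suc m)))
      = (\<Sum>M\<in>Pow (Top R I). \<Sum>y\<in>?B. (if M \<subseteq> T y then (-1) ^ card M else 0))"
    by (rule sum.cong[OF refl], subst fib) (auto simp: sum_distrib_left intro!: sum.cong)
  also have "\<dots> = (\<Sum>y\<in>?B. \<Sum>M\<in>Pow (Top R I). (if M \<subseteq> T y then (-1) ^ card M else 0))"
    by (rule sum.swap)
  also have "\<dots> = (\<Sum>y\<in>?B. \<Sum>M\<in>Pow (T y). (-1::real) ^ card M)"
  proof (rule sum.cong[OF refl])
    fix y
    have "Pow (T y) = {M\<in>Pow (Top R I). M \<subseteq> T y}" unfolding T_def by auto
    moreover have "(\<Sum>M\<in>Pow (Top R I). (if M \<subseteq> T y then (-1::real) ^ card M else 0)) = (\<Sum>M\<in>{M\<in>Pow (Top R I). M \<subseteq> T y}. (-1) ^ card M)"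
      by (rule sum.inter_filter[symmetric]) (use finTop in simp)
    ultimately show "(\<Sum>M\<in>Pow (Top R I). (if M \<subseteq> T y then (-1::real) ^ card M else 0)) = (\<Sum>M\<in>Pow (T y). (-1) ^ card M)"
      by simp
  qed
  also have "\<dots> = (\<Sum>y\<in>?B. if T y = {} then 1 else 0)"
    by (rule sum.cong[OF refl], rule alt_sum_pow) (use finTop in \<open>auto simp: T_def\<close>)
  also have "\<dots> = real (card {y\<in>?B. T y = {}})"
    using finB by (simp add: sum_ind_card)
  also have "{y\<in>?B. T y = {}} = {y \<in> PiE I (\<lambda>_. {1..m}). \<forall>i\<in>I. \<forall>j\<in>I. R i j \<longrightarrow> y j \<le> y i}"
  proof (intro equalityI subsetI)
    fix y assume y: "y \<in> {y\<in>?B. T y = {}}"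
    have "y i \<noteq> Suc m" if i: "i \<in> I" for i
    proof
      assume yi: "y i = Suc m"
      let ?X = "{k\<in>I. y k = Suc m}"
      have "finite ?X" "?X \<noteq> {}" using fin i yi by auto
      hence "Max (h ` ?X) \<in> h ` ?X" by (intro Max_in) auto
      then obtain k where hk0: "Max (h ` ?X) = h k" and k1: "k \<in> ?X" by (rule imageE)
      note hk = hk0[symmetric]
      have k2: "h k' \<le> h k" if "k' \<in> ?X" for k'
        unfolding hk using \<open>finite ?X\<close> that by (intro Max_ge) auto
      note k = k1 k2
      have "k \<in> Top R I"
      proof -
        have "\<not> R k' k" if "k' \<in> I" for k'
        proof
          assume Rk: "R k' k"
          have yy: "\<forall>i\<in>I. \<forall>j\<in>I. R i j \<longrightarrow> y j \<le> y i" using y by simp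
          have "k \<in> I" using k(1) by simp
          hence "y k \<le> y k'" using yy that Rk by blast
          moreover have "y k' \<le> Suc m" using y that by (auto simp: PiE_iff)
          ultimately have "k' \<in> ?X" using k(1) that by auto
          thus False using k(2) rank[OF Rk] by force
        qed
        thus ?thesis using k(1) by (auto simp: Top_def)
      qed
      hence "k \<in> T y" using k(1) unfolding T_def by auto
      thus False using y by auto
    qed
    thus "y \<in> {y \<in> PiE I (\<lambda>_. {1..m}). \<forall>i\<in>I. \<forall>j\<in>I. R i j \<longrightarrow> y j \<le> y i}"
      using y by (auto simp: PiE_iff le_Suc_eq)
  next
    fix y assume "y \<in> {y \<in> PiE I (\<lambda>_. {1..m}). \<forall>i\<in>I. \<forall>j\<in>I. R i j \<longrightarrow> y j \<le> y i}"
    thus "y \<in> {y\<in>?B. T y = {}}" unfolding T_def by (auto simp: PiE_iff Top_def)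
  qed
  finally show ?thesis unfolding Wc_def by simp
qed


lemma Sc_empty: "Sc R {} m = 1" unfolding Sc_def by simp
lemma Wc_empty: "Wc R {} m = 1" unfolding Wc_def by simp
lemma PiE_zero: "I \<noteq> {} \<Longrightarrow> PiE I (\<lambda>_. {1..0::nat}) = {}"
  by (auto simp: PiE_eq_empty_iff)
lemma Sc_zero: assumes "I \<noteq> {}" shows "Sc R I 0 = 0"
proof - have "PiE I (\<lambda>_. {1..0::nat}) = {}" using assms by (rule PiE_zero) thus ?thesis unfolding Sc_def by simp qed
lemma Wc_zero: assumes "I \<noteq> {}" shows "Wc R I 0 = 0"
proof - have "PiE I (\<lambda>_. {1..0::nat}) = {}" using assms by (rule PiE_zero) thus ?thesis unfolding Wc_def by simp qed

definition recP :: "('a \<Rightarrow> 'a \<Rightarrow> bool) \<Rightarrow> 'a set \<Rightarrow> real poly \<Rightarrow> bool" where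
  "recP R J p \<longleftrightarrow> degree p \<le> card J \<and> (\<forall>m. poly p (real m) = real (Sc R J m)) \<and>
     (\<forall>m. (-1) ^ card J * poly p (- real m) = real (Wc R J m))"

lemma recip:
  fixes R :: "'a \<Rightarrow> 'a \<Rightarrow> bool" and h :: "'a \<Rightarrow> real"
  assumes rank: "\<And>i j. R i j \<Longrightarrow> h j < h i"
  shows "finite I \<Longrightarrow> \<exists>p. recP R I p"
proof (induction "card I" arbitrary: I rule: less_induct)
  case less
  note fin = less.prems
  show ?case
  proof (cases "I = {}")
    case True
    show ?thesis by (rule exI[of _ 1]) (simp add: recP_def True Sc_empty Wc_empty)
  next
    case False
    define n where "n = card I"
    have n0: "n > 0" using False fin by (simp add: n_def card_gt_0_iff)
    define TT where "TT = Pow (Top R I) - {{}}"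
    have finTT: "finite TT" unfolding TT_def using fin by (auto simp: Top_def)
    have TTsub: "M \<subseteq> I" "M \<noteq> {}" if "M \<in> TT" for M using that by (auto simp: TT_def Top_def)
    define pp where "pp J = (SOME p. recP R J p)" for J
    have ppP: "recP R (I - M) (pp (I - M))" if "M \<in> TT" for M
    proof -
      have "card (I - M) < card I"
        by (rule psubset_card_mono[OF fin]) (use TTsub[OF that] in blast)
      hence "\<exists>p. recP R (I - M) p" using less(1) fin by auto
      thus ?thesis unfolding pp_def by (rule someI_ex)
    qed
    have cardM: "card (I - M) + card M = n" if "M \<in> TT" for M
    proof -
      have fM: "finite M" using TTsub[OF that] fin finite_subset by blast
      have "card (I - M) = card I - card M" by (rule card_Diff_subset[OF fM TTsub(1)[OF that]])
      moreover have "card M \<le> card I" by (rule card_mono[OF fin TTsub(1)[OF that]])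
      ultimately show ?thesis unfolding n_def by simp
    qed
    define r where "r = (\<Sum>M\<in>TT. pp (I - M))"
    have degr: "degree r \<le> n - 1"
      unfolding r_def
    proof (rule degree_sum_le[OF finTT])
      fix M assume M: "M \<in> TT"
      have "card M > 0" using TTsub[OF M] fin by (meson card_0_eq finite_subset neq0_conv)
      thus "degree (pp (I - M)) \<le> n - 1" using ppP[OF M] cardM[OF M] unfolding recP_def by linarith
    qed
    have Srec: "real (Sc R I (Suc m)) = real (Sc R I m) + poly r (real m)" for m
    proof -
      have "Sc R I (Suc m) = (\<Sum>M\<in>Pow (Top R I). Sc R (I - M) m)" by (rule S_rec[OF fin])
      also have "\<dots> = Sc R (I - {}) m + (\<Sum>M\<in>TT. Sc R (I - M) m)"
        unfolding TT_def using fin by (subst sum.remove[of _ "{}"]) (auto simp: Top_def)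
      finally have "real (Sc R I (Suc m)) = real (Sc R I m) + (\<Sum>M\<in>TT. real (Sc R (I - M) m))"
        by simp
      also have "(\<Sum>M\<in>TT. real (Sc R (I - M) m)) = poly r (real m)"
        unfolding r_def poly_sum using ppP unfolding recP_def by simp
      finally show ?thesis .
    qed
    obtain s where s: "degree s \<le> Suc (n - 1)" "\<forall>x. poly s (x+1) = poly s x + poly r x"
      "\<forall>m. poly s (real m) = real (Sc R I m)"
      using antidiff[OF degr, of "\<lambda>m. real (Sc R I m)"] Srec by blast
    have W: "(-1) ^ n * poly s (- real m) = real (Wc R I m)" for m
    proof (induction m)
      case 0
      have "poly s (real 0) = real (Sc R I 0)" using s(3) by blast
      thus ?case using False by (simp add: Sc_zero Wc_zero)
    next
      case (Suc m)
      have e: "poly s (- real m) = poly s (- real (Suc m)) + poly r (- real (Suc m))"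
        using s(2)[rule_format, of "- real (Suc m)"] by simp
      have t: "(-1) ^ n * poly (pp (I - M)) (- real (Suc m)) = (-1) ^ card M * real (Wc R (I - M) (Suc m))"
        if M: "M \<in> TT" for M
      proof -
        have "(-1::real) ^ n = (-1) ^ card M * (-1) ^ card (I - M)"
          using cardM[OF M] by (simp add: power_add[symmetric] add.commute)
        moreover have "(-1) ^ card (I - M) * poly (pp (I - M)) (- real (Suc m)) = real (Wc R (I - M) (Suc m))"
          using ppP[OF M] unfolding recP_def by blast
        ultimately show ?thesis by (simp add: mult.assoc)
      qed
      have "real (Wc R I m) = (\<Sum>M\<in>Pow (Top R I). (-1) ^ card M * real (Wc R (I - M) (Suc m)))"
        by (rule W_rec[OF fin rank])
      also have "\<dots> = (-1) ^ card ({}::'a set) * real (Wc R (I - {}) (Suc m)) + (\<Sum>M\<in>TT. (-1) ^ card M * real (Wc R (I - M) (Suc m)))"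
        unfolding TT_def using fin by (subst sum.remove[of _ "{}"]) (auto simp: Top_def)
      also have "(\<Sum>M\<in>TT. (-1) ^ card M * real (Wc R (I - M) (Suc m))) = (-1) ^ n * poly r (- real (Suc m))"
        unfolding r_def poly_sum sum_distrib_left using t by simp
      finally have "real (Wc R I m) = real (Wc R I (Suc m)) + (-1) ^ n * poly r (- real (Suc m))" by simp
      with Suc.IH e show ?case by (simp add: algebra_simps)
    qed
    show ?thesis
      by (rule exI[of _ s]) (use s W n0 in \<open>simp add: recP_def n_def\<close>)
  qed
qed


definition Rv :: "(real^'d) set \<Rightarrow> real^'d \<Rightarrow> 'd \<Rightarrow> 'd \<Rightarrow> bool" where
  "Rv P v i j \<longleftrightarrow> i \<noteq> j \<and> (\<forall>x. v \<in> max_face P x \<longrightarrow> x $ j \<le> x $ i)"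

lemma ev_exists: "\<forall>\<^sub>F \<epsilon> in at_right (0::real). Q \<epsilon> \<Longrightarrow> \<exists>\<epsilon>>0. \<epsilon> < 1 \<and> Q \<epsilon>"
proof -
  assume "\<forall>\<^sub>F \<epsilon> in at_right (0::real). Q \<epsilon>"
  hence "\<forall>\<^sub>F \<epsilon> in at_right (0::real). \<epsilon> \<in> {0<..<1} \<and> Q \<epsilon>"
    using eventually_at_right_real[of 0 1] by (simp add: eventually_conj_iff)
  from eventually_happens'[OF _ this] show ?thesis by auto
qed


lemma ev_pos: "0 < (c::real) \<Longrightarrow> \<forall>\<^sub>F \<epsilon> in at_right (0::real). 0 < c + \<epsilon> * d"
proof -
  assume c: "0 < c"
  have "((\<lambda>\<epsilon>. c + \<epsilon> * d) \<longlongrightarrow> c + 0 * d) (at_right 0)"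
    by (intro tendsto_intros)
  thus ?thesis using c by (intro order_tendstoD(1)) auto
qed

lemma ev_ne: "(c::real) \<noteq> 0 \<or> d \<noteq> 0 \<Longrightarrow> \<forall>\<^sub>F \<epsilon> in at_right (0::real). c + \<epsilon> * d \<noteq> 0"
proof -
  assume cd: "c \<noteq> 0 \<or> d \<noteq> 0"
  show ?thesis
  proof (cases "c = 0")
    case True
    hence "d \<noteq> 0" using cd by simp
    thus ?thesis using eventually_at_right_less[of "0::real"] True
      by (auto elim!: eventually_mono)
  next
    case False
    show ?thesis
    proof (cases "c > 0")
      case True thus ?thesis using ev_pos[of c d] by (auto elim!: eventually_mono)
    next
      case F2: False
      hence "0 < -c" using False by simp
      thus ?thesis using ev_pos[of "-c" "-d"] by (auto elim!: eventually_mono)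
    qed
  qed
qed

context
  fixes P :: "(real ^ 'd::finite) set"
  assumes GP: "gen_permutahedron P"
begin

lemma P_hull: "\<exists>S. finite S \<and> S \<noteq> {} \<and> P = convex hull S"
  using GP unfolding gen_permutahedron_def polytope_def by blast

lemma P_props: "compact P" "convex P" "P \<noteq> {}"
  using P_hull finite_imp_compact_convex_hull by auto

lemma mf_face: "max_face P y face_of P" "max_face P y \<noteq> {}"
proof -
  have "continuous_on P (\<lambda>x. y \<bullet> x)" by (intro continuous_intros)
  then obtain x0 where x0: "x0 \<in> P" "\<forall>x\<in>P. y \<bullet> x \<le> y \<bullet> x0"
    using continuous_attains_sup[OF P_props(1) P_props(3), of "\<lambda>x. y \<bullet> x"] by blast
  have eq: "max_face P y = P \<inter> {x. y \<bullet> x = y \<bullet> x0}"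
    unfolding max_face_def using x0 by (auto intro: order_antisym)
  show "max_face P y face_of P" unfolding eq
    by (rule face_of_Int_supporting_hyperplane_le[OF P_props(2)]) (use x0 in auto)
  show "max_face P y \<noteq> {}" unfolding eq using x0 by auto
qed

lemma mf_sub: "max_face P y \<subseteq> P" unfolding max_face_def by auto

lemma mono_face:
  assumes "\<And>a b. y $ b \<le> y $ a \<Longrightarrow> y' $ b \<le> y' $ a"
  shows "max_face P y \<subseteq> max_face P y'"
proof -
  define F where "F = max_face P y"
  have all: "\<forall>F. F face_of P \<and> F \<noteq> {} \<longrightarrow> (\<exists>C \<subseteq> braid_fan. normal_cone P F = \<Union>C)"
    using GP unfolding gen_permutahedron_def by (rule conjunct2)
  have "F face_of P \<and> F \<noteq> {}" unfolding F_def using mf_face by simp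
  hence "\<exists>C \<subseteq> braid_fan. normal_cone P F = \<Union>C" using all by simp
  then obtain C where C: "C \<subseteq> braid_fan" "normal_cone P F = \<Union>C" by blast
  have "y \<in> normal_cone P F" unfolding normal_cone_def F_def by simp
  then obtain c where c: "c \<in> C" "y \<in> c" using C by auto
  hence "c \<in> braid_fan" using C(1) by blast
  then obtain f where f: "c = braid_cone f" unfolding braid_fan_def by auto
  have yc: "y \<in> braid_cone f" using c(2) f by simp
  have "y' \<in> braid_cone f"
    unfolding braid_cone_def
  proof (intro CollectI conjI allI impI)
    fix i j assume "f i = f j"
    hence "y $ i = y $ j" using yc unfolding braid_cone_def by blast
    hence "y $ j \<le> y $ i" "y $ i \<le> y $ j" by auto
    thus "y' $ i = y' $ j" using assms[of j i] assms[of i j] by simp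
  next
    fix i j assume "f i < f j"
    hence "y $ j \<le> y $ i" using yc unfolding braid_cone_def by blast
    thus "y' $ j \<le> y' $ i" using assms by blast
  qed
  hence "y' \<in> \<Union>C" using c(1) f by blast
  hence "y' \<in> normal_cone P F" using C(2) by simp
  thus ?thesis unfolding normal_cone_def F_def by simp
qed

lemma mf_hull:
  assumes S: "P = convex hull S" and v: "v \<in> P" and le: "\<forall>s\<in>S. y \<bullet> s \<le> y \<bullet> v"
  shows "v \<in> max_face P y"
proof -
  have "S \<subseteq> {x. y \<bullet> x \<le> y \<bullet> v}" using le by auto
  hence "convex hull S \<subseteq> {x. y \<bullet> x \<le> y \<bullet> v}"
    by (rule hull_minimal) (rule convex_halfspace_le)
  thus ?thesis using v S unfolding max_face_def by auto
qed

lemma exposed: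
  assumes "v extreme_point_of P"
  shows "\<exists>z. max_face P z = {v}"
proof -
  obtain S where S: "finite S" "P = convex hull S" using P_hull by blast
  have "Polytope.polytope P" unfolding Polytope.polytope_def using S by blast
  hence ph: "polyhedron P" by (rule polytope_imp_polyhedron)
  have "{v} face_of P" using assms by (simp add: face_of_singleton)
  hence "{v} exposed_face_of P" using exposed_face_of_polyhedron[OF ph] by blast
  then obtain a b where ab: "P \<subseteq> {x. a \<bullet> x \<le> b}" "{v} = P \<inter> {x. a \<bullet> x = b}"
    unfolding exposed_face_of_def by blast
  have "max_face P a = {v}"
  proof
    show "max_face P a \<subseteq> {v}"
    proof
      fix x assume x: "x \<in> max_face P a"
      have "v \<in> P" "a \<bullet> v = b" using ab(2) by auto
      hence "a \<bullet> x \<ge> b" "x \<in> P" using x unfolding max_face_def by auto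
      moreover have "a \<bullet> x \<le> b" using ab(1) \<open>x \<in> P\<close> by auto
      ultimately have "x \<in> P \<inter> {x. a \<bullet> x = b}" by simp
      thus "x \<in> {v}" by (simp only: ab(2))
    qed
    have "v \<in> P" "a \<bullet> v = b" using ab(2) by auto
    thus "{v} \<subseteq> max_face P a" using ab(1) unfolding max_face_def by auto
  qed
  thus ?thesis by blast
qed

lemma perturb:
  assumes z: "max_face P z = {v}"
  shows "\<forall>\<^sub>F \<epsilon> in at_right 0. v \<in> max_face P (z + \<epsilon> *\<^sub>R w)"
proof -
  obtain S where S: "finite S" "P = convex hull S" using P_hull by blast
  have SP: "S \<subseteq> P" unfolding S(2) by (rule hull_subset)
  have vm: "v \<in> max_face P z" using z by simp
  have vP: "v \<in> P" using vm mf_sub by blast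
  have vmax: "\<forall>x\<in>P. z \<bullet> x \<le> z \<bullet> v" using vm unfolding max_face_def by simp
  have strict: "z \<bullet> s < z \<bullet> v" if s: "s \<in> S - {v}" for s
  proof -
    have sP: "s \<in> P" using s SP by blast
    have "s \<notin> max_face P z" using s by (simp add: z)
    hence "\<not> (\<forall>x'\<in>P. z \<bullet> x' \<le> z \<bullet> s)" using sP unfolding max_face_def by simp
    then obtain x' where "x' \<in> P" "z \<bullet> s < z \<bullet> x'" by (auto simp: not_le)
    moreover have "z \<bullet> x' \<le> z \<bullet> v" using vmax \<open>x' \<in> P\<close> by blast
    ultimately show ?thesis by linarith
  qed
  have "\<forall>s\<in>S - {v}. \<forall>\<^sub>F \<epsilon> in at_right 0. (z + \<epsilon> *\<^sub>R w) \<bullet> s < (z + \<epsilon> *\<^sub>R w) \<bullet> v"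
  proof
    fix s assume s: "s \<in> S - {v}"
    have "\<forall>\<^sub>F \<epsilon> in at_right 0. 0 < (z \<bullet> v - z \<bullet> s) + \<epsilon> * (w \<bullet> v - w \<bullet> s)"
      using strict[OF s] by (intro ev_pos) simp
    thus "\<forall>\<^sub>F \<epsilon> in at_right 0. (z + \<epsilon> *\<^sub>R w) \<bullet> s < (z + \<epsilon> *\<^sub>R w) \<bullet> v"
      by (rule eventually_mono) (simp add: inner_add_left inner_diff_left algebra_simps)
  qed
  hence "\<forall>\<^sub>F \<epsilon> in at_right 0. \<forall>s\<in>S - {v}. (z + \<epsilon> *\<^sub>R w) \<bullet> s < (z + \<epsilon> *\<^sub>R w) \<bullet> v"
    using S(1) by (simp add: eventually_ball_finite_distrib)
  thus ?thesis
  proof (rule eventually_mono)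
    fix \<epsilon> assume "\<forall>s\<in>S - {v}. (z + \<epsilon> *\<^sub>R w) \<bullet> s < (z + \<epsilon> *\<^sub>R w) \<bullet> v"
    hence "\<forall>s\<in>S. (z + \<epsilon> *\<^sub>R w) \<bullet> s \<le> (z + \<epsilon> *\<^sub>R w) \<bullet> v"
    proof (intro ballI)
      fix s assume H: "\<forall>s\<in>S - {v}. (z + \<epsilon> *\<^sub>R w) \<bullet> s < (z + \<epsilon> *\<^sub>R w) \<bullet> v" and s: "s \<in> S"
      show "(z + \<epsilon> *\<^sub>R w) \<bullet> s \<le> (z + \<epsilon> *\<^sub>R w) \<bullet> v"
      proof (cases "s = v")
        case False thus ?thesis using H s by (simp add: less_imp_le)
      qed simp
    qed
    thus "v \<in> max_face P (z + \<epsilon> *\<^sub>R w)" by (rule mf_hull[OF S(2) vP])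
  qed
qed


lemma gen_strict:
  assumes y: "max_face P y = {v}" and R: "Rv P v i j"
  shows "y $ j < y $ i"
proof (rule ccontr)
  assume nl: "\<not> y $ j < y $ i"
  have ij: "i \<noteq> j" and R': "\<forall>x. v \<in> max_face P x \<longrightarrow> x $ j \<le> x $ i"
    using R unfolding Rv_def by auto
  have "y $ j \<le> y $ i" using R' y by simp
  define w where "w = axis j (1::real) - axis i 1"
  obtain \<epsilon> where e: "\<epsilon> > 0" "v \<in> max_face P (y + \<epsilon> *\<^sub>R w)"
    using ev_exists[OF perturb[OF y, of w]] by blast
  hence "(y + \<epsilon> *\<^sub>R w) $ j \<le> (y + \<epsilon> *\<^sub>R w) $ i" using R' by blast
  moreover have "(y + \<epsilon> *\<^sub>R w) $ j = y $ j + \<epsilon>" "(y + \<epsilon> *\<^sub>R w) $ i = y $ i - \<epsilon>"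
    using ij by (simp_all add: w_def axis_def)
  ultimately show False using nl \<open>y $ j \<le> y $ i\<close> e(1) by linarith
qed

lemma distinct_pt:
  assumes "v extreme_point_of P"
  shows "\<exists>z. v \<in> max_face P z \<and> (\<forall>a b. a \<noteq> b \<longrightarrow> z $ a \<noteq> z $ b)"
proof -
  obtain z0 where z0: "max_face P z0 = {v}" using exposed[OF assms] by blast
  define w :: "real^'d" where "w = (\<chi> k. real (to_nat k))"
  have e1: "\<forall>\<^sub>F \<epsilon> in at_right 0. v \<in> max_face P (z0 + \<epsilon> *\<^sub>R w)" by (rule perturb[OF z0])
  have e2: "\<forall>\<^sub>F \<epsilon> in at_right 0. \<forall>ab::'d \<times> 'd. fst ab \<noteq> snd ab \<longrightarrow>
              (z0 + \<epsilon> *\<^sub>R w) $ fst ab \<noteq> (z0 + \<epsilon> *\<^sub>R w) $ snd ab"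
  proof (rule eventually_all_finite)
    fix ab :: "'d \<times> 'd"
    obtain a b where ab: "ab = (a, b)" by (cases ab)
    show "\<forall>\<^sub>F \<epsilon> in at_right 0. fst ab \<noteq> snd ab \<longrightarrow> (z0 + \<epsilon> *\<^sub>R w) $ fst ab \<noteq> (z0 + \<epsilon> *\<^sub>R w) $ snd ab"
    proof (cases "a = b")
      case True thus ?thesis using ab by simp
    next
      case False
      hence "w $ a - w $ b \<noteq> 0" unfolding w_def using inj_on_to_nat[of UNIV] by (auto dest: injD)
      hence "\<forall>\<^sub>F \<epsilon> in at_right 0. (z0 $ a - z0 $ b) + \<epsilon> * (w $ a - w $ b) \<noteq> 0"
        by (intro ev_ne) simp
      thus ?thesis using ab by (rule_tac eventually_mono) (auto simp: algebra_simps)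
    qed
  qed
  obtain \<epsilon> where "\<epsilon> > 0" "v \<in> max_face P (z0 + \<epsilon> *\<^sub>R w)"
     "\<forall>ab::'d \<times> 'd. fst ab \<noteq> snd ab \<longrightarrow> (z0 + \<epsilon> *\<^sub>R w) $ fst ab \<noteq> (z0 + \<epsilon> *\<^sub>R w) $ snd ab"
    using ev_exists[OF eventually_conj[OF e1 e2]] by blast
  thus ?thesis by (intro exI[of _ "z0 + \<epsilon> *\<^sub>R w"]) force
qed


lemma finite_argmin:
  fixes f :: "'b \<Rightarrow> real"
  assumes "finite A" "A \<noteq> {}"
  shows "\<exists>a\<in>A. \<forall>b\<in>A. f a \<le> f b"
proof -
  have "Min (f ` A) \<in> f ` A" using assms by (intro Min_in) auto
  then obtain a where a: "Min (f ` A) = f a" "a \<in> A" by (rule imageE)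
  have "\<forall>b\<in>A. f a \<le> f b" unfolding a(1)[symmetric] using assms(1) by (intro ballI Min_le) auto
  thus ?thesis using a(2) by blast
qed

lemma key:
  assumes yR: "\<forall>i j. Rv P v i j \<longrightarrow> y $ j < y $ i"
  shows "v \<in> max_face P z \<Longrightarrow> (\<forall>a b. a \<noteq> b \<longrightarrow> z $ a \<noteq> z $ b) \<Longrightarrow> v \<in> max_face P y"
proof (induction "card {(i,j). z $ j < z $ i \<and> y $ i < y $ j}" arbitrary: z rule: less_induct)
  case less
  define D where "D = {(i,j). z $ j < z $ i \<and> y $ i < y $ j}"
  have finD: "finite D" by simp
  have zv: "v \<in> max_face P z" and zd: "\<forall>a b. a \<noteq> b \<longrightarrow> z $ a \<noteq> z $ b" using less.prems by auto
  show ?case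
  proof (cases "D = {}")
    case True
    have "max_face P z \<subseteq> max_face P y"
    proof (rule mono_face)
      fix a b assume ab: "z $ b \<le> z $ a"
      show "y $ b \<le> y $ a"
      proof (cases "a = b")
        case False
        hence "z $ b < z $ a" using ab zd by force
        moreover have "(a, b) \<notin> D" using True by simp
        ultimately show ?thesis unfolding D_def by auto
      qed simp
    qed
    thus ?thesis using zv by blast
  next
    case False
    obtain ij where ij: "ij \<in> D" "\<forall>b\<in>D. z $ fst ij - z $ snd ij \<le> z $ fst b - z $ snd b"
      using finite_argmin[OF finD False, of "\<lambda>ab. z $ fst ab - z $ snd ab"] by blast
    obtain i j where ijd: "ij = (i, j)" by (cases ij)
    have zji: "z $ j < z $ i" and yij: "y $ i < y $ j" using ij(1) unfolding ijd D_def by auto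
    have adj: "\<not> (z $ j < z $ k \<and> z $ k < z $ i)" for k
    proof
      assume k: "z $ j < z $ k \<and> z $ k < z $ i"
      show False
      proof (cases "y $ i < y $ k")
        case True
        hence "(i, k) \<in> D" using k unfolding D_def by auto
        thus False using ij(2) k unfolding ijd by fastforce
      next
        case False
        hence "(k, j) \<in> D" using k yij unfolding D_def by auto
        thus False using ij(2) k unfolding ijd by fastforce
      qed
    qed
    have distf: "\<And>a b. a \<noteq> b \<Longrightarrow> z $ a \<noteq> z $ b" using zd by blast
    note sw = swap_facts[of "\<lambda>k. z $ k", OF distf zji adj]
    define z' :: "real^'d" where "z' = (\<chi> k. if k = i then z $ j else if k = j then z $ i else z $ k)"
    have z'c: "z' $ k = (if k = i then z $ j else if k = j then z $ i else z $ k)" for k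
      unfolding z'_def by simp
    have z'd: "\<forall>a b. a \<noteq> b \<longrightarrow> z' $ a \<noteq> z' $ b" using sw(1) unfolding z'c by blast
    define D' where "D' = {(a,b). z' $ b < z' $ a \<and> y $ a < y $ b}"
    have "D' \<subseteq> D - {(i,j)}"
    proof
      fix ab assume ab: "ab \<in> D'"
      obtain a b where abd: "ab = (a,b)" by (cases ab)
      have 1: "z' $ b < z' $ a" "y $ a < y $ b" using ab unfolding abd D'_def by auto
      have "(a, b) \<noteq> (j, i)" using 1(2) yij by auto
      hence "z $ b < z $ a \<and> (a, b) \<noteq> (i, j)" using sw(2)[of b a] 1(1) unfolding z'c by blast
      thus "ab \<in> D - {(i,j)}" using 1 unfolding abd D_def by auto
    qed
    hence "D' \<subset> D" using ij(1) unfolding ijd by blast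
    hence lt: "card D' < card D" by (rule psubset_card_mono[OF finD])
    show ?thesis
    proof (cases "v \<in> max_face P z'")
      case True
      show ?thesis using less.hyps[of z'] lt True z'd unfolding D_def D'_def by blast
    next
      case False
      have "Rv P v i j"
        unfolding Rv_def
      proof (intro conjI allI impI)
        show "i \<noteq> j" using zji by auto
        fix x assume xv: "v \<in> max_face P x"
        show "x $ j \<le> x $ i"
        proof (rule ccontr)
          assume "\<not> x $ j \<le> x $ i"
          hence xij: "x $ i < x $ j" by simp
          define p :: "real^'d" where "p = (\<chi> k. if k = i \<or> k = j then (z $ i + z $ j) / 2 else z $ k)"
          have pc: "p $ k = (if k = i \<or> k = j then (z $ i + z $ j) / 2 else z $ k)" for k
            unfolding p_def by simp
          have pv: "v \<in> max_face P p"
            using mono_face[of z p] sw(3) zv unfolding pc by blast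
          have ev: "\<forall>\<^sub>F \<epsilon> in at_right 0. \<forall>ab::'d\<times>'d. p $ snd ab < p $ fst ab \<longrightarrow>
              ((1 - \<epsilon>) *\<^sub>R p + \<epsilon> *\<^sub>R x) $ snd ab < ((1 - \<epsilon>) *\<^sub>R p + \<epsilon> *\<^sub>R x) $ fst ab"
          proof (rule eventually_all_finite)
            fix ab :: "'d \<times> 'd"
            show "\<forall>\<^sub>F \<epsilon> in at_right 0. p $ snd ab < p $ fst ab \<longrightarrow>
              ((1 - \<epsilon>) *\<^sub>R p + \<epsilon> *\<^sub>R x) $ snd ab < ((1 - \<epsilon>) *\<^sub>R p + \<epsilon> *\<^sub>R x) $ fst ab"
            proof (cases "p $ snd ab < p $ fst ab")
              case True
              hence "\<forall>\<^sub>F \<epsilon> in at_right 0. 0 < (p $ fst ab - p $ snd ab) + \<epsilon> * ((x $ fst ab - x $ snd ab) - (p $ fst ab - p $ snd ab))"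
                by (intro ev_pos) simp
              thus ?thesis by (rule eventually_mono) (simp add: algebra_simps)
            qed simp
          qed
          obtain \<epsilon> where e: "\<epsilon> > 0" "\<epsilon> < 1" and eP: "\<forall>ab::'d\<times>'d. p $ snd ab < p $ fst ab \<longrightarrow>
              ((1 - \<epsilon>) *\<^sub>R p + \<epsilon> *\<^sub>R x) $ snd ab < ((1 - \<epsilon>) *\<^sub>R p + \<epsilon> *\<^sub>R x) $ fst ab"
            using ev_exists[OF ev] by blast
          define q where "q = (1 - \<epsilon>) *\<^sub>R p + \<epsilon> *\<^sub>R x"
          have qv: "v \<in> max_face P q"
          proof -
            have vP: "v \<in> P" using pv mf_sub by blast
            have "q \<bullet> u \<le> q \<bullet> v" if "u \<in> P" for u
            proof -
              have "p \<bullet> u \<le> p \<bullet> v" "x \<bullet> u \<le> x \<bullet> v" using pv xv that unfolding max_face_def by auto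
              hence "(1 - \<epsilon>) * (p \<bullet> u) + \<epsilon> * (x \<bullet> u) \<le> (1 - \<epsilon>) * (p \<bullet> v) + \<epsilon> * (x \<bullet> v)"
                using e by (intro add_mono mult_left_mono) auto
              thus ?thesis unfolding q_def by (simp add: inner_add_left)
            qed
            thus ?thesis using vP unfolding max_face_def by auto
          qed
          have "max_face P q \<subseteq> max_face P z'"
          proof (rule mono_face)
            fix a b assume qab: "q $ b \<le> q $ a"
            show "z' $ b \<le> z' $ a"
            proof (rule ccontr)
              assume "\<not> z' $ b \<le> z' $ a"
              hence z'ab: "z' $ a < z' $ b" by simp
              show False
              proof (cases "(a, b) = (i, j)")
                case True
                have "p $ i = p $ j" using pc[of i] pc[of j] by simp
                hence "q $ j - q $ i = \<epsilon> * (x $ j - x $ i)" unfolding q_def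
                  by (simp add: algebra_simps)
                moreover have "\<epsilon> * (x $ j - x $ i) > 0" using e xij by simp
                ultimately show False using qab True by simp
              next
                case False
                have "p $ a < p $ b" using sw(4)[of a b] z'ab False unfolding z'c pc by blast
                hence "q $ a < q $ b" using eP unfolding q_def by force
                thus False using qab by simp
              qed
            qed
          qed
          thus False using qv False by blast
        qed
      qed
      hence "y $ j < y $ i" using yR by blast
      thus ?thesis using yij by simp
    qed
  qed
qed


lemma closure_K:
  assumes v: "v extreme_point_of P" and yR: "\<forall>i j. Rv P v i j \<longrightarrow> y $ j \<le> y $ i"
  shows "v \<in> max_face P y"
proof -
  obtain z where zv: "v \<in> max_face P z" and zd: "\<forall>a b. a \<noteq> b \<longrightarrow> z $ a \<noteq> z $ b"
    using distinct_pt[OF v] by blast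
  have zR: "z $ j < z $ i" if "Rv P v i j" for i j
  proof -
    have "i \<noteq> j" "z $ j \<le> z $ i" using that zv unfolding Rv_def by auto
    thus ?thesis using zd by force
  qed
  have e2: "\<forall>\<^sub>F \<epsilon> in at_right 0. \<forall>ab::'d \<times> 'd. fst ab \<noteq> snd ab \<longrightarrow>
              (y + \<epsilon> *\<^sub>R z) $ fst ab \<noteq> (y + \<epsilon> *\<^sub>R z) $ snd ab"
  proof (rule eventually_all_finite)
    fix ab :: "'d \<times> 'd"
    obtain a b where ab: "ab = (a, b)" by (cases ab)
    show "\<forall>\<^sub>F \<epsilon> in at_right 0. fst ab \<noteq> snd ab \<longrightarrow> (y + \<epsilon> *\<^sub>R z) $ fst ab \<noteq> (y + \<epsilon> *\<^sub>R z) $ snd ab"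
    proof (cases "a = b")
      case True thus ?thesis using ab by simp
    next
      case False
      hence "z $ a - z $ b \<noteq> 0" using zd by auto
      hence "\<forall>\<^sub>F \<epsilon> in at_right 0. (y $ a - y $ b) + \<epsilon> * (z $ a - z $ b) \<noteq> 0"
        by (intro ev_ne) simp
      thus ?thesis using ab by (rule_tac eventually_mono) (auto simp: algebra_simps)
    qed
  qed
  have ev: "\<forall>\<^sub>F \<epsilon> in at_right 0. v \<in> max_face P (y + \<epsilon> *\<^sub>R z)"
    using eventually_conj[OF e2 eventually_at_right_less[of "0::real"]]
  proof (rule eventually_mono)
    fix \<epsilon> :: real assume H: "(\<forall>ab::'d \<times> 'd. fst ab \<noteq> snd ab \<longrightarrow> (y + \<epsilon> *\<^sub>R z) $ fst ab \<noteq> (y + \<epsilon> *\<^sub>R z) $ snd ab) \<and> 0 < \<epsilon>"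
    have "\<forall>i j. Rv P v i j \<longrightarrow> (y + \<epsilon> *\<^sub>R z) $ j < (y + \<epsilon> *\<^sub>R z) $ i"
    proof (intro allI impI)
      fix i j assume R: "Rv P v i j"
      have "y $ j \<le> y $ i" using yR R by blast
      moreover have "\<epsilon> * z $ j < \<epsilon> * z $ i" using zR[OF R] H by simp
      ultimately show "(y + \<epsilon> *\<^sub>R z) $ j < (y + \<epsilon> *\<^sub>R z) $ i" by simp
    qed
    moreover have "\<forall>a b. a \<noteq> b \<longrightarrow> z $ a \<noteq> z $ b" by (rule zd)
    ultimately show "v \<in> max_face P (y + \<epsilon> *\<^sub>R z)" by (intro key[OF _ zv]) auto
  qed
  have vP: "v \<in> P" using v unfolding extreme_point_of_def by simp
  have "y \<bullet> u \<le> y \<bullet> v" if u: "u \<in> P" for u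
  proof -
    have t: "((\<lambda>\<epsilon>. (y + \<epsilon> *\<^sub>R z) \<bullet> v - (y + \<epsilon> *\<^sub>R z) \<bullet> u) \<longlongrightarrow> (y + 0 *\<^sub>R z) \<bullet> v - (y + 0 *\<^sub>R z) \<bullet> u) (at_right 0)"
      by (intro tendsto_intros)
    have "\<forall>\<^sub>F \<epsilon> in at_right 0. 0 \<le> (y + \<epsilon> *\<^sub>R z) \<bullet> v - (y + \<epsilon> *\<^sub>R z) \<bullet> u"
      using ev by (rule eventually_mono) (use u in \<open>auto simp: max_face_def\<close>)
    from tendsto_lowerbound[OF t this] show ?thesis by simp
  qed
  thus ?thesis using vP unfolding max_face_def by auto
qed

lemma gen_char:
  assumes v: "v extreme_point_of P"
  shows "max_face P y = {v} \<longleftrightarrow> (\<forall>i j. Rv P v i j \<longrightarrow> y $ j < y $ i)"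
proof
  assume "max_face P y = {v}"
  thus "\<forall>i j. Rv P v i j \<longrightarrow> y $ j < y $ i" using gen_strict by blast
next
  assume yR: "\<forall>i j. Rv P v i j \<longrightarrow> y $ j < y $ i"
  have "\<forall>i j. Rv P v i j \<longrightarrow> y $ j \<le> y $ i" using yR by (simp add: less_imp_le)
  hence vy: "v \<in> max_face P y" by (rule closure_K[OF v])
  have "u = v" if u: "u \<in> max_face P y" for u
  proof (rule ccontr)
    assume uv: "u \<noteq> v"
    define w where "w = u - v"
    have e: "\<forall>\<^sub>F \<epsilon> in at_right 0. \<forall>ab::'d \<times> 'd. Rv P v (fst ab) (snd ab) \<longrightarrow>
              (y + \<epsilon> *\<^sub>R w) $ snd ab < (y + \<epsilon> *\<^sub>R w) $ fst ab"
    proof (rule eventually_all_finite)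
      fix ab :: "'d \<times> 'd"
      show "\<forall>\<^sub>F \<epsilon> in at_right 0. Rv P v (fst ab) (snd ab) \<longrightarrow>
              (y + \<epsilon> *\<^sub>R w) $ snd ab < (y + \<epsilon> *\<^sub>R w) $ fst ab"
      proof (cases "Rv P v (fst ab) (snd ab)")
        case True
        hence "0 < y $ fst ab - y $ snd ab" using yR by simp
        hence "\<forall>\<^sub>F \<epsilon> in at_right 0. 0 < (y $ fst ab - y $ snd ab) + \<epsilon> * (w $ fst ab - w $ snd ab)"
          by (rule ev_pos)
        thus ?thesis by (rule eventually_mono) (simp add: algebra_simps)
      qed simp
    qed
    obtain \<epsilon> where eps: "\<epsilon> > 0" and eR: "\<forall>ab::'d \<times> 'd. Rv P v (fst ab) (snd ab) \<longrightarrow>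
              (y + \<epsilon> *\<^sub>R w) $ snd ab < (y + \<epsilon> *\<^sub>R w) $ fst ab"
      using ev_exists[OF e] by blast
    have "\<forall>i j. Rv P v i j \<longrightarrow> (y + \<epsilon> *\<^sub>R w) $ j \<le> (y + \<epsilon> *\<^sub>R w) $ i"
    proof (intro allI impI)
      fix i j assume "Rv P v i j"
      hence "(y + \<epsilon> *\<^sub>R w) $ j < (y + \<epsilon> *\<^sub>R w) $ i" using eR[rule_format, of "(i,j)"] by simp
      thus "(y + \<epsilon> *\<^sub>R w) $ j \<le> (y + \<epsilon> *\<^sub>R w) $ i" by simp
    qed
    hence "v \<in> max_face P (y + \<epsilon> *\<^sub>R w)" by (rule closure_K[OF v])
    moreover have uP: "u \<in> P" using u mf_sub by blast
    ultimately have 1: "(y + \<epsilon> *\<^sub>R w) \<bullet> u \<le> (y + \<epsilon> *\<^sub>R w) \<bullet> v" unfolding max_face_def by auto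
    have vP: "v \<in> P" using vy mf_sub by blast
    have "y \<bullet> u \<le> y \<bullet> v" "y \<bullet> v \<le> y \<bullet> u" using u vy uP vP unfolding max_face_def by auto
    hence "\<epsilon> * (w \<bullet> u) \<le> \<epsilon> * (w \<bullet> v)" using 1 by (simp add: inner_add_left)
    hence "w \<bullet> u \<le> w \<bullet> v" using eps by simp
    hence "w \<bullet> w \<le> 0" unfolding w_def by (simp add: inner_diff_right inner_diff_left algebra_simps)
    hence "w = 0" by (metis inner_eq_zero_iff inner_ge_zero order_antisym)
    thus False using uv unfolding w_def by simp
  qed
  thus "max_face P y = {v}" using vy by blast
qed

end


lemma grid_bij: "bij_betw (\<lambda>f. (\<chi> i. real (f i)) :: real^'d::finite) (PiE UNIV (\<lambda>_. {1..m})) (grid m)"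
proof (rule bij_betw_imageI)
  show "inj_on (\<lambda>f. (\<chi> i. real (f i)) :: real^'d) (PiE UNIV (\<lambda>_. {1..m}))"
  proof (rule inj_onI)
    fix f g :: "'d \<Rightarrow> nat" assume "(\<chi> i. real (f i)) = ((\<chi> i. real (g i)) :: real^'d)"
    hence "(\<chi> i. real (f i)) $ i = ((\<chi> i. real (g i)) :: real^'d) $ i" for i by simp
    hence "real (f i) = real (g i)" for i by simp
    thus "f = g" by (simp add: fun_eq_iff)
  qed
  show "(\<lambda>f. (\<chi> i. real (f i)) :: real^'d) ` (PiE UNIV (\<lambda>_. {1..m})) = grid m"
  proof (intro equalityI subsetI)
    fix y assume "y \<in> (\<lambda>f. (\<chi> i. real (f i)) :: real^'d) ` (PiE UNIV (\<lambda>_. {1..m}))"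
    then obtain f where f: "f \<in> PiE UNIV (\<lambda>_. {1..m})" "y = (\<chi> i. real (f i))" by blast
    have "y $ i \<in> real ` {1..m}" for i
    proof -
      have "f i \<in> {1..m}" using f(1) by (simp add: PiE_iff)
      thus ?thesis using f(2) by simp
    qed
    thus "y \<in> grid m" unfolding grid_def by blast
  next
    fix y :: "real^'d" assume y: "y \<in> grid m"
    define f where "f i = nat \<lfloor>y $ i\<rfloor>" for i
    have fy: "real (f i) = y $ i" "f i \<in> {1..m}" for i
    proof -
      obtain k where "k \<in> {1..m}" "y $ i = real k" using y unfolding grid_def by blast
      thus "real (f i) = y $ i" "f i \<in> {1..m}" unfolding f_def by auto
    qed
    have "f \<in> PiE UNIV (\<lambda>_. {1..m})" using fy(2) by (auto simp: PiE_iff)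
    moreover have "y = (\<chi> i. real (f i))" using fy(1) by (simp add: vec_eq_iff)
    ultimately show "y \<in> (\<lambda>f. (\<chi> i. real (f i)) :: real^'d) ` (PiE UNIV (\<lambda>_. {1..m}))" by blast
  qed
qed

lemma card_grid_sub:
  "card {y \<in> (grid m :: (real^'d::finite) set). Q y} = card {f \<in> PiE UNIV (\<lambda>_. {1..m}). Q (\<chi> i. real (f i))}"
proof -
  let ?phi = "(\<lambda>f. (\<chi> i. real (f i)) :: real^'d)"
  have b: "bij_betw ?phi (PiE UNIV (\<lambda>_. {1..m})) (grid m)" by (rule grid_bij)
  have im: "?phi ` (PiE UNIV (\<lambda>_. {1..m})) = grid m" using b unfolding bij_betw_def by blast
  have "?phi ` {f \<in> PiE UNIV (\<lambda>_. {1..m}). Q (?phi f)} = {y \<in> grid m. Q y}"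
  proof (intro equalityI subsetI)
    fix y assume "y \<in> ?phi ` {f \<in> PiE UNIV (\<lambda>_. {1..m}). Q (?phi f)}"
    then obtain f where "f \<in> PiE UNIV (\<lambda>_. {1..m})" "Q (?phi f)" "y = ?phi f" by blast
    thus "y \<in> {y \<in> grid m. Q y}" using im by blast
  next
    fix y assume y: "y \<in> {y \<in> grid m. Q y}"
    hence "y \<in> ?phi ` (PiE UNIV (\<lambda>_. {1..m}))" using im by simp
    then obtain f where "f \<in> PiE UNIV (\<lambda>_. {1..m})" "y = ?phi f" by blast
    thus "y \<in> ?phi ` {f \<in> PiE UNIV (\<lambda>_. {1..m}). Q (?phi f)}" using y by blast
  qed
  moreover have "inj_on ?phi {f \<in> PiE UNIV (\<lambda>_. {1..m}). Q (?phi f)}"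
    using b unfolding bij_betw_def by (rule inj_on_subset[OF conjunct1]) auto
  ultimately show ?thesis by (simp add: card_image[symmetric])
qed

lemma card_grid: "card (grid m :: (real^'d::finite) set) = m ^ CARD('d)"
proof -
  have "card (PiE (UNIV::'d set) (\<lambda>_. {1..m})) = card (grid m :: (real^'d) set)"
    by (rule bij_betw_same_card[OF grid_bij])
  hence "card (grid m :: (real^'d) set) = card (PiE (UNIV::'d set) (\<lambda>_. {1..m}))" by (rule sym)
  also have "\<dots> = m ^ CARD('d)" by (simp add: card_PiE)
  finally show ?thesis .
qed

lemma finite_grid: "finite (grid m :: (real^'d::finite) set)"
proof -
  have "finite (PiE (UNIV::'d set) (\<lambda>_. {1..m}))" by (intro finite_PiE) auto
  thus ?thesis using bij_betw_finite[OF grid_bij] by blast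
qed

lemma poly_bound:
  fixes p :: "real poly"
  assumes "degree p \<le> n" "1 \<le> \<bar>x\<bar>"
  shows "\<bar>poly p x\<bar> \<le> (\<Sum>i\<le>degree p. \<bar>coeff p i\<bar>) * \<bar>x\<bar> ^ n"
proof -
  have "\<bar>poly p x\<bar> = \<bar>\<Sum>i\<le>degree p. coeff p i * x ^ i\<bar>" by (simp add: poly_altdef)
  also have "\<dots> \<le> (\<Sum>i\<le>degree p. \<bar>coeff p i * x ^ i\<bar>)" by (rule sum_abs)
  also have "\<dots> \<le> (\<Sum>i\<le>degree p. \<bar>coeff p i\<bar> * \<bar>x\<bar> ^ n)"
  proof (rule sum_mono)
    fix i assume "i \<in> {..degree p}"
    hence "\<bar>x\<bar> ^ i \<le> \<bar>x\<bar> ^ n" using assms by (intro power_increasing) auto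
    thus "\<bar>coeff p i * x ^ i\<bar> \<le> \<bar>coeff p i\<bar> * \<bar>x\<bar> ^ n"
      by (simp add: abs_mult power_abs mult_left_mono)
  qed
  also have "\<dots> = (\<Sum>i\<le>degree p. \<bar>coeff p i\<bar>) * \<bar>x\<bar> ^ n" by (simp add: sum_distrib_right)
  finally show ?thesis .
qed

lemma sum_ind_card_nat:
  "finite B \<Longrightarrow> (\<Sum>y\<in>B. if Q y then 1 else 0 :: nat) = card {y\<in>B. Q y}"
  by (simp add: sum.inter_filter[symmetric])

context
  fixes P :: "(real ^ 'd::finite) set"
  assumes GP: "gen_permutahedron P"
begin

lemma cnt_G:
  assumes v: "v extreme_point_of P"
  shows "card {y \<in> grid m. max_face P y = {v}} = Sc (Rv P v) UNIV m"
proof -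
  have "card {y \<in> grid m. max_face P y = {v}} = card {f \<in> PiE UNIV (\<lambda>_. {1..m}). max_face P (\<chi> i. real (f i)) = {v}}"
    by (rule card_grid_sub)
  also have "{f \<in> PiE UNIV (\<lambda>_. {1..m}). max_face P (\<chi> i. real (f i)) = {v}} =
      {f \<in> PiE UNIV (\<lambda>_. {1..m}). \<forall>i\<in>UNIV. \<forall>j\<in>UNIV. Rv P v i j \<longrightarrow> f j < f i}"
    using gen_char[OF GP v] by simp
  finally show ?thesis unfolding Sc_def .
qed

lemma K_char:
  assumes v: "v extreme_point_of P"
  shows "v \<in> max_face P y \<longleftrightarrow> (\<forall>i j. Rv P v i j \<longrightarrow> y $ j \<le> y $ i)"
  using closure_K[OF GP v] unfolding Rv_def by blast

lemma cnt_K: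
  assumes v: "v extreme_point_of P"
  shows "card {y \<in> grid m. v \<in> max_face P y} = Wc (Rv P v) UNIV m"
proof -
  have "card {y \<in> grid m. v \<in> max_face P y} = card {f \<in> PiE UNIV (\<lambda>_. {1..m}). v \<in> max_face P (\<chi> i. real (f i))}"
    by (rule card_grid_sub)
  also have "{f \<in> PiE UNIV (\<lambda>_. {1..m}). v \<in> max_face P (\<chi> i. real (f i))} =
      {f \<in> PiE UNIV (\<lambda>_. {1..m}). \<forall>i\<in>UNIV. \<forall>j\<in>UNIV. Rv P v i j \<longrightarrow> f j \<le> f i}"
    using K_char[OF v] by simp
  finally show ?thesis unfolding Wc_def .
qed

definition "VV = {v. v extreme_point_of P}"

lemma finV: "finite VV"
proof -
  obtain S where S: "finite S" "P = convex hull S" using P_hull[OF GP] by blast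
  have "VV \<subseteq> S"
  proof
    fix v assume "v \<in> VV"
    hence "v extreme_point_of convex hull S" unfolding VV_def using S(2) by simp
    thus "v \<in> S" by (rule extreme_point_of_convex_hull)
  qed
  thus ?thesis using S(1) finite_subset by blast
qed

lemma vert_face: "vertices (max_face P y) = {v \<in> VV. v \<in> max_face P y}"
  unfolding vertices_def VV_def using extreme_point_of_face[OF mf_face(1)[OF GP]] by blast

lemma chi_sum: "chi P m = (\<Sum>v\<in>VV. card {y \<in> grid m. max_face P y = {v}})"
proof -
  have eq: "{y \<in> grid m. generic_dir P y} = (\<Union>v\<in>VV. {y \<in> grid m. max_face P y = {v}})"
  proof (intro equalityI subsetI)
    fix y assume y: "y \<in> {y \<in> grid m. generic_dir P y}"
    then obtain v where v: "max_face P y = {v}" unfolding generic_dir_def by blast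
    have "{v} face_of P" using mf_face(1)[OF GP, of y] v by simp
    hence "v \<in> VV" unfolding VV_def by (simp add: face_of_singleton)
    thus "y \<in> (\<Union>v\<in>VV. {y \<in> grid m. max_face P y = {v}})" using y v by blast
  next
    fix y assume "y \<in> (\<Union>v\<in>VV. {y \<in> grid m. max_face P y = {v}})"
    thus "y \<in> {y \<in> grid m. generic_dir P y}" unfolding generic_dir_def by blast
  qed
  show ?thesis unfolding chi_def eq
    by (rule card_UN_disjoint[OF finV]) (auto intro: finite_subset[OF _ finite_grid])
qed

lemma rhs_sum: "(\<Sum>y\<in>grid m. card (vertices (max_face P y))) = (\<Sum>v\<in>VV. card {y \<in> grid m. v \<in> max_face P y})"
proof -
  have "(\<Sum>y\<in>grid m. card (vertices (max_face P y))) = (\<Sum>y\<in>grid m. \<Sum>v\<in>VV. if v \<in> max_face P y then 1 else 0)"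
    unfolding vert_face using finV by (simp add: sum.inter_filter[symmetric])
  also have "\<dots> = (\<Sum>v\<in>VV. \<Sum>y\<in>grid m. if v \<in> max_face P y then 1 else 0)" by (rule sum.swap)
  also have "\<dots> = (\<Sum>v\<in>VV. card {y \<in> grid m. v \<in> max_face P y})"
    by (intro sum.cong refl sum_ind_card_nat finite_grid)
  finally show ?thesis .
qed

lemma vert_pos: "1 \<le> card (vertices (max_face P y))"
proof -
  have c: "compact (max_face P y)" "convex (max_face P y)"
    using face_of_imp_compact[OF P_props(2)[OF GP] P_props(1)[OF GP] mf_face(1)[OF GP]]
      face_of_imp_convex[OF mf_face(1)[OF GP]] by auto
  have "vertices (max_face P y) \<noteq> {}"
  proof
    assume "vertices (max_face P y) = {}"
    hence E: "{x. x extreme_point_of (max_face P y)} = {}" unfolding vertices_def by simp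
    have KM: "max_face P y = convex hull {x. x extreme_point_of (max_face P y)}"
      by (rule Krein_Milman_Minkowski[OF c])
    have "max_face P y = convex hull {}" using KM by (simp only: E)
    thus False using mf_face(2)[OF GP] by simp
  qed
  moreover have "finite (vertices (max_face P y))" unfolding vert_face using finV by simp
  ultimately show ?thesis by (simp add: Suc_le_eq card_gt_0_iff)
qed

end


theorem mainTheorem6:
  fixes P :: "(real ^ 'd::finite) set"
  assumes "gen_permutahedron P"
  shows "\<exists>p :: real poly. degree p = CARD('d) \<and>
           (\<forall>m::nat. m > 0 \<longrightarrow> real (chi P m) = poly p (real m)) \<and>
           (\<forall>m::nat. m > 0 \<longrightarrow>
              (-1) ^ CARD('d) * poly p (- real m) =
              real (\<Sum>y\<in>grid m. card (vertices (max_face P y))))"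
proof -
  note GP = assms
  define V where "V = VV P"
  have finV': "finite V" unfolding V_def by (rule finV[OF GP])
  have ex: "\<exists>p. recP (Rv P v) UNIV p" if v: "v \<in> V" for v
  proof -
    have ve: "v extreme_point_of P" using v unfolding V_def VV_def[OF GP] by simp
    obtain z where z: "max_face P z = {v}" using exposed[OF GP ve] by blast
    have rk: "\<And>i j. Rv P v i j \<Longrightarrow> z $ j < z $ i" using gen_strict[OF GP z] by blast
    have "finite (UNIV :: 'd set)" by simp
    thus ?thesis using recip[where R="Rv P v" and h="\<lambda>i. z $ i" and I="UNIV::'d set"] rk by blast
  qed
  define pv where "pv v = (SOME p. recP (Rv P v) UNIV p)" for v
  have pvP: "recP (Rv P v) UNIV (pv v)" if "v \<in> V" for v
    unfolding pv_def by (rule someI_ex[OF ex[OF that]])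
  have ve: "v extreme_point_of P" if "v \<in> V" for v using that unfolding V_def VV_def[OF GP] by simp
  define p where "p = (\<Sum>v\<in>V. pv v)"
  have dle: "degree p \<le> CARD('d)"
    unfolding p_def by (rule degree_sum_le[OF finV']) (use pvP in \<open>auto simp: recP_def\<close>)
  have c1: "real (chi P m) = poly p (real m)" for m
  proof -
    have "real (chi P m) = (\<Sum>v\<in>V. real (card {y \<in> grid m. max_face P y = {v}}))"
      unfolding chi_sum[OF GP] V_def by simp
    also have "\<dots> = (\<Sum>v\<in>V. poly (pv v) (real m))"
      by (rule sum.cong[OF refl]) (use pvP cnt_G[OF GP ve] in \<open>auto simp: recP_def\<close>)
    finally show ?thesis unfolding p_def poly_sum .
  qed
  have c2: "(-1) ^ CARD('d) * poly p (- real m) = real (\<Sum>y\<in>grid m. card (vertices (max_face P y)))" for m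
  proof -
    have "real (\<Sum>y\<in>grid m. card (vertices (max_face P y))) = (\<Sum>v\<in>V. real (card {y \<in> grid m. v \<in> max_face P y}))"
      unfolding rhs_sum[OF GP] V_def by simp
    also have "\<dots> = (\<Sum>v\<in>V. (-1) ^ CARD('d) * poly (pv v) (- real m))"
      by (rule sum.cong[OF refl]) (use pvP cnt_K[OF GP ve] in \<open>auto simp: recP_def\<close>)
    finally show ?thesis unfolding p_def poly_sum sum_distrib_left by simp
  qed
  have lb: "real m ^ CARD('d) \<le> real (\<Sum>y\<in>grid m. card (vertices (max_face P y)))" for m
  proof -
    have "(\<Sum>y\<in>(grid m :: (real^'d) set). (1::nat)) \<le> (\<Sum>y\<in>grid m. card (vertices (max_face P y)))"
      using vert_pos[OF GP] by (intro sum_mono) auto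
    hence "card (grid m :: (real^'d) set) \<le> (\<Sum>y\<in>grid m. card (vertices (max_face P y)))" by simp
    hence "m ^ CARD('d) \<le> (\<Sum>y\<in>grid m. card (vertices (max_face P y)))" by (simp add: card_grid)
    hence "real (m ^ CARD('d)) \<le> real (\<Sum>y\<in>grid m. card (vertices (max_face P y)))" by (rule of_nat_mono)
    thus ?thesis by simp
  qed
  have "degree p = CARD('d)"
  proof (rule ccontr)
    assume "degree p \<noteq> CARD('d)"
    hence dl: "degree p \<le> CARD('d) - 1" using dle by simp
    have d0: "CARD('d) > 0" by simp
    define C where "C = (\<Sum>i\<le>degree p. \<bar>coeff p i\<bar>)"
    define m where "m = nat \<lceil>C\<rceil> + 1"
    have mC: "real m > C" unfolding m_def by linarith
    have m1: "real m \<ge> 1" unfolding m_def by simp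
    have "real m ^ CARD('d) \<le> (-1) ^ CARD('d) * poly p (- real m)" using lb[of m] c2[of m] by simp
    also have "\<dots> \<le> \<bar>(-1) ^ CARD('d) * poly p (- real m)\<bar>" by (rule abs_ge_self)
    also have "\<dots> = \<bar>poly p (- real m)\<bar>" by (simp add: abs_mult power_abs)
    also have "\<dots> \<le> C * \<bar>- real m\<bar> ^ (CARD('d) - 1)" unfolding C_def
      by (rule poly_bound[OF dl]) (use m1 in simp)
    also have "\<dots> = C * real m ^ (CARD('d) - 1)" by simp
    also have "\<dots> < real m * real m ^ (CARD('d) - 1)"
      using mC m1 by (intro mult_strict_right_mono) auto
    also have "\<dots> = real m ^ CARD('d)" using d0 by (metis Suc_diff_1 power_Suc)
    finally show False by simp
  qed
  thus ?thesis using c1 c2 by blast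
qed


end
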